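(* Let $\nu\in\mathcal M^+_1(\mathbb R)$. Then there exists $\mu\in\mathcal M^+_2(\mathbb R)$ such that $$C_1[\nu](z)=C_2[\mu](z),\qquad z\in\mathbb C^+,$$ if and only if $\nu((-\infty,0])<\infty$.
   Context: $\mathbb C^+=\{z:\operatorname{Im}z>0\}$. For $\alpha\ge0$, $\mathcal M^+_\alpha(\mathbb R)$ is the set of positive Borel (Radon) measures $\mu$ on $\mathbb R$ with $\int_{\mathbb R}(1+|t|)^{-\alpha}\mu(dt)<\infty$. For $\alpha>0$, $C_\alpha[\mu](z)=\int_{\mathbb R}\frac{\mu(dt)}{(z+t)^\alpha}$, $z\in\mathbb C^+$. *)

theory Defs
  imports "HOL-Analysis.Analysis"
begin

text \<open>M^+_alpha(R): positive Borel measures on R with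
  \<integral> (1+|t|)^(-alpha) d mu < \<infinity>  (local finiteness follows for alpha \<ge> 0).\<close>
definition M_plus :: "real \<Rightarrow> real measure set" where
  "M_plus \<alpha> = {\<mu>. sets \<mu> = sets borel \<and>
      (\<integral>\<^sup>+ t. ennreal ((1 + \<bar>t\<bar>) powr (- \<alpha>)) \<partial>\<mu>) < \<infinity>}"

definition C_transform :: "nat \<Rightarrow> real measure \<Rightarrow> complex \<Rightarrow> complex" where
  "C_transform \<alpha> \<mu> z = (\<integral> t. 1 / (z + complex_of_real t) ^ \<alpha> \<partial>\<mu>)"

end

theory Submission
  imports Defs
begin

lemma Mplus_bounded_finite:
  assumes M: "M \<in> M_plus a" and a: "0 \<le> a" and A: "A \<in> sets borel" and sub: "A \<subseteq> {-r..r}"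
  shows "emeasure M A < \<infinity>"
proof (cases "A = {}")
  case True then show ?thesis by simp
next
  case False
  have sM: "sets M = sets borel" using M by (simp add: M_plus_def)
  have fin: "(\<integral>\<^sup>+ t. ennreal ((1 + \<bar>t\<bar>) powr (- a)) \<partial>M) < \<infinity>" using M by (simp add: M_plus_def)
  have r0: "0 \<le> r" using sub False by auto
  have pos: "0 < (1 + r) powr (- a)" using r0 by simp
  have le: "ennreal ((1 + r) powr (- a)) * indicator A t \<le> ennreal ((1 + \<bar>t\<bar>) powr (- a))" for t
  proof (cases "t \<in> A")
    case True
    then have "\<bar>t\<bar> \<le> r" using sub by (force simp: subset_iff abs_le_iff)
    then have "(1 + r) powr (- a) \<le> (1 + \<bar>t\<bar>) powr (- a)"
      using a by (intro powr_mono2') auto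
    then show ?thesis using True by simp
  qed simp
  have AM: "A \<in> sets M" using A sM by simp
  have "(\<integral>\<^sup>+ t. ennreal ((1 + r) powr (- a)) * indicator A t \<partial>M) = ennreal ((1 + r) powr (- a)) * emeasure M A"
    by (rule nn_integral_cmult_indicator[OF AM])
  moreover have "(\<integral>\<^sup>+ t. ennreal ((1 + r) powr (- a)) * indicator A t \<partial>M) \<le> (\<integral>\<^sup>+ t. ennreal ((1 + \<bar>t\<bar>) powr (- a)) \<partial>M)"
    by (rule nn_integral_mono) (rule le)
  ultimately have "ennreal ((1 + r) powr (- a)) * emeasure M A < \<infinity>" using fin by simp
  then show ?thesis using pos by (auto simp: ennreal_mult_less_top)
qed

lemma Mplus_sigma_finite:
  assumes M: "M \<in> M_plus a" and a: "0 \<le> a"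
  shows "sigma_finite_measure M"
proof -
  have sM: "sets M = sets borel" using M by (simp add: M_plus_def)
  have sp: "space M = UNIV" using sets_eq_imp_space_eq[OF sM] by simp
  show ?thesis
  proof (unfold_locales, intro exI[of _ "range (\<lambda>n::nat. {- real n .. real n})"] conjI)
    show "countable (range (\<lambda>n::nat. {- real n .. real n}))" by simp
    show "range (\<lambda>n::nat. {- real n..real n}) \<subseteq> sets M" unfolding sM by (simp add: image_subset_iff)
    show "\<Union> (range (\<lambda>n::nat. {- real n..real n})) = space M"
      unfolding sp
    proof (rule set_eqI, rule iffI)
      fix x :: real
      obtain n :: nat where "\<bar>x\<bar> \<le> real n" using real_arch_simple by blast
      then have "x \<in> {- real n..real n}" by (simp add: abs_le_iff)
      then show "x \<in> \<Union> (range (\<lambda>n::nat. {- real n..real n}))" by blast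
    qed simp
    show "\<forall>A\<in>range (\<lambda>n::nat. {- real n..real n}). emeasure M A \<noteq> \<infinity>"
    proof
      fix A assume "A \<in> range (\<lambda>n::nat. {- real n..real n})"
      then obtain n :: nat where A: "A = {- real n..real n}" by blast
      have "emeasure M A < \<infinity>" unfolding A by (rule Mplus_bounded_finite[OF M a _ order_refl]) simp
      then show "emeasure M A \<noteq> \<infinity>" by simp
    qed
  qed
qed


lemma Mplus_mono12: "M \<in> M_plus 1 \<Longrightarrow> M \<in> M_plus 2"
proof -
  assume M: "M \<in> M_plus 1"
  have "ennreal ((1 + \<bar>t\<bar>) powr (- 2)) \<le> ennreal ((1 + \<bar>t\<bar>) powr (- 1))" for t :: real
    by (intro ennreal_leI powr_mono) auto
  then have "(\<integral>\<^sup>+ t. ennreal ((1 + \<bar>t\<bar>) powr (- 2)) \<partial>M) \<le> (\<integral>\<^sup>+ t. ennreal ((1 + \<bar>t\<bar>) powr (- 1)) \<partial>M)"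
    by (intro nn_integral_mono) auto
  then show ?thesis using M unfolding M_plus_def by auto
qed

lemma norm_lower:
  assumes z: "Im z > 0"
  shows "\<exists>c>0. \<forall>t::real. c * (1 + \<bar>t\<bar>) \<le> cmod (z + of_real t)"
proof -
  define m where "m = min 1 (Im z)"
  define c where "c = m / (2 * (1 + \<bar>Re z\<bar>))"
  have m0: "0 < m" "m \<le> 1" "m \<le> Im z" using z by (auto simp: m_def)
  have c0: "c > 0" using m0 by (simp add: c_def add_pos_nonneg)
  have "c * (1 + \<bar>t\<bar>) \<le> cmod (z + of_real t)" for t :: real
  proof -
    define u where "u = Re z + t"
    have h1: "\<bar>u\<bar> \<le> cmod (z + of_real t)"
      using abs_Re_le_cmod[of "z + of_real t"] by (simp add: u_def)
    have h2: "Im z \<le> cmod (z + of_real t)"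
      using abs_Im_le_cmod[of "z + of_real t"] by simp
    have "m * \<bar>u\<bar> \<le> \<bar>u\<bar>" using m0 by (simp add: mult_left_le_one_le)
    then have h3: "m * (1 + \<bar>u\<bar>) \<le> 2 * cmod (z + of_real t)"
      using h1 h2 m0 by (simp add: algebra_simps)
    have h4: "1 + \<bar>t\<bar> \<le> (1 + \<bar>u\<bar>) * (1 + \<bar>Re z\<bar>)"
    proof -
      have "\<bar>t\<bar> \<le> \<bar>u\<bar> + \<bar>Re z\<bar>" by (simp add: u_def)
      moreover have "0 \<le> \<bar>u\<bar> * \<bar>Re z\<bar>" by simp
      moreover have "(1 + \<bar>u\<bar>) * (1 + \<bar>Re z\<bar>) = 1 + \<bar>u\<bar> + \<bar>Re z\<bar> + \<bar>u\<bar> * \<bar>Re z\<bar>"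
        by (simp add: algebra_simps)
      ultimately show ?thesis by linarith
    qed
    have "c * (1 + \<bar>t\<bar>) \<le> c * ((1 + \<bar>u\<bar>) * (1 + \<bar>Re z\<bar>))"
      using h4 c0 by (intro mult_left_mono) auto
    also have "\<dots> = m * (1 + \<bar>u\<bar>) / 2"
      by (simp add: c_def field_simps)
    also have "\<dots> \<le> cmod (z + of_real t)" using h3 by simp
    finally show ?thesis .
  qed
  then show ?thesis using c0 by blast
qed

lemma norm_inv_pow_bound:
  assumes z: "Im z > 0"
  shows "\<exists>C>0. \<forall>t::real. cmod (1 / (z + of_real t) ^ k) \<le> C * (1 + \<bar>t\<bar>) powr (- real k)"
proof -
  obtain c where c: "c > 0" "\<And>t::real. c * (1 + \<bar>t\<bar>) \<le> cmod (z + of_real t)"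
    using norm_lower[OF z] by blast
  have "cmod (1 / (z + of_real t) ^ k) \<le> (1 / c) ^ k * (1 + \<bar>t\<bar>) powr (- real k)" for t :: real
  proof -
    have p: "0 < c * (1 + \<bar>t\<bar>)" using c by simp
    have "(c * (1 + \<bar>t\<bar>)) ^ k \<le> cmod (z + of_real t) ^ k"
      using c p by (intro power_mono) auto
    moreover have "0 < cmod (z + of_real t)" using p c(2)[of t] by linarith
    ultimately have "1 / cmod (z + of_real t) ^ k \<le> 1 / (c * (1 + \<bar>t\<bar>)) ^ k"
      using p by (intro divide_left_mono) (auto intro!: mult_pos_pos)
    also have "\<dots> = (1 / c) ^ k * (1 / (1 + \<bar>t\<bar>) ^ k)"
      by (simp add: power_mult_distrib power_one_over)
    also have "(1 / (1 + \<bar>t\<bar>) ^ k) = (1 + \<bar>t\<bar>) powr (- real k)"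
      by (simp add: powr_minus powr_realpow inverse_eq_divide)
    finally show ?thesis by (simp add: norm_divide norm_power)
  qed
  moreover have "(1 / c) ^ k > 0" using c by simp
  ultimately show ?thesis by blast
qed

lemma Mplus_weight_integrable:
  assumes M: "M \<in> M_plus a"
  shows "integrable M (\<lambda>t. (1 + \<bar>t\<bar>) powr (- a))"
proof (rule integrableI_bounded)
  have sM: "sets M = sets borel" using M by (simp add: M_plus_def)
  show "(\<lambda>t. (1 + \<bar>t\<bar>) powr (- a)) \<in> borel_measurable M"
    unfolding measurable_cong_sets[OF sM refl] by measurable
  show "(\<integral>\<^sup>+ t. ennreal (norm ((1 + \<bar>t\<bar>) powr (- a))) \<partial>M) < \<infinity>"
    using M by (simp add: M_plus_def)
qed

lemma C_integrable:
  assumes M: "M \<in> M_plus (real k)" and z: "Im z > 0"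
  shows "integrable M (\<lambda>t. 1 / (z + of_real t) ^ k)"
proof -
  have sM: "sets M = sets borel" using M by (simp add: M_plus_def)
  obtain C where C: "C > 0" "\<And>t::real. cmod (1 / (z + of_real t) ^ k) \<le> C * (1 + \<bar>t\<bar>) powr (- real k)"
    using norm_inv_pow_bound[OF z] by blast
  have i1: "integrable M (\<lambda>t. C * (1 + \<bar>t\<bar>) powr (- real k))"
    using Mplus_weight_integrable[OF M] by simp
  have i2: "(\<lambda>t. 1 / (z + of_real t) ^ k) \<in> borel_measurable M"
    unfolding measurable_cong_sets[OF sM refl] by measurable
  have i3: "AE t in M. norm (1 / (z + of_real t) ^ k) \<le> norm (C * (1 + \<bar>t\<bar>) powr (- real k))"
    using C by (auto intro!: AE_I2 order_trans[OF C(2)])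
  show ?thesis by (rule Bochner_Integration.integrable_bound[OF i1 i2 i3])
qed

lemma Im_inv1: "Im (1 / Complex a 1) = - 1 / (a^2 + 1)"
  by (simp add: Im_divide power2_eq_square)

lemma Im_inv2: "Im (1 / (Complex a 1)^2) = - 2 * a / (a^2 + 1)^2"
  by (simp add: Im_divide power2_eq_square complex_norm_square field_simps cmod_def)

lemma Complex_add_real: "Complex x 1 + of_real t = Complex (x + t) 1"
  by (simp add: complex_eq_iff)


lemma w2_eq: "(1 + \<bar>t\<bar>) powr (-2) = 1 / (1 + \<bar>t::real\<bar>)^2"
proof -
  have "(1 + \<bar>t\<bar>) powr (- real (2::nat)) = inverse ((1 + \<bar>t\<bar>) ^ 2)"
    by (simp only: powr_minus) (simp add: powr_realpow)
  then show ?thesis by (simp add: inverse_eq_divide)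
qed

lemma w1_eq: "(1 + \<bar>t\<bar>) powr (-1) = 1 / (1 + \<bar>t::real\<bar>)"
  by (simp add: powr_minus inverse_eq_divide)

lemma sq_le: "(1 + \<bar>t\<bar>)^2 \<le> 2 * (1 + (t::real)^2)"
proof -
  have "0 \<le> (\<bar>t\<bar> - 1)^2" by simp
  then show ?thesis by (simp add: power2_eq_square algebra_simps)
qed

lemma k1_bound:
  fixes x b t :: real
  assumes x: "x \<in> {0..b}"
  shows "1 / ((x + t)^2 + 1) \<le> (4 + 4 * b^2) * (1 + \<bar>t\<bar>) powr (-2)"
proof -
  have x0: "0 \<le> x" and x1: "x \<le> b" using x by auto
  have xb: "x^2 \<le> b^2" by (rule power_mono[OF x1 x0])
  have "t^2 \<le> 2 * (x + t)^2 + 2 * x^2"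
  proof -
    have "0 \<le> (x + t + x)^2" by simp
    then show ?thesis by (simp add: power2_eq_square algebra_simps)
  qed
  then have E: "(1 + \<bar>t\<bar>)^2 \<le> (4 + 4 * b^2) * ((x + t)^2 + 1)"
    using sq_le[of t] xb by (simp add: algebra_simps) (smt (verit) mult_nonneg_nonneg zero_le_power2)
  have A: "0 < (x + t)^2 + 1" by (smt (verit) zero_le_power2)
  have D: "0 < (1 + \<bar>t\<bar>)^2" by (smt (verit) zero_less_power abs_ge_zero)
  have "(1 + \<bar>t\<bar>)^2 / ((x + t)^2 + 1) \<le> 4 + 4 * b^2" using E A by (simp add: divide_le_eq mult.commute)
  then have "1 / ((x + t)^2 + 1) \<le> (4 + 4 * b^2) / (1 + \<bar>t\<bar>)^2" using D by (simp add: le_divide_eq)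
  then show ?thesis by (simp add: w2_eq)
qed

lemma k2_bound: "\<bar>2 * a / (a^2 + 1)^2\<bar> \<le> 1 / (a^2 + (1::real))"
proof -
  have "2 * \<bar>a\<bar> \<le> a^2 + 1"
  proof -
    have "0 \<le> (\<bar>a\<bar> - 1)^2" by simp
    then show ?thesis by (simp add: power2_eq_square algebra_simps)
  qed
  moreover have "0 < a^2 + 1" by (simp add: add_nonneg_pos)
  ultimately show ?thesis by (simp add: abs_mult divide_simps power2_eq_square)
qed

lemma nz0: "(y::real)^2 + 1 \<noteq> 0"
  by (smt (verit) zero_le_power2)

lemma FTC_k1: "(\<integral>x. indicator {0..b} x * (1 / ((x + t)^2 + 1)) \<partial>lborel) = arctan (b + t) - arctan t"
  if "0 \<le> b" for b t :: real
proof -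
  have "(\<integral>x. indicator {0..b} x *\<^sub>R (1 / ((x + t)^2 + 1)) \<partial>lborel) = arctan (b + t) - arctan (0 + t)"
  proof (rule integral_FTC_atLeastAtMost[OF that])
    fix x assume "0 \<le> x" "x \<le> b"
    have "((\<lambda>x. arctan (x + t)) has_real_derivative (1 / ((x + t)^2 + 1))) (at x)"
      by (auto intro!: derivative_eq_intros simp: field_simps add_nonneg_pos)
    then show "((\<lambda>x. arctan (x + t)) has_vector_derivative (1 / ((x + t)^2 + 1))) (at x within {0..b})"
      by (simp add: has_real_derivative_iff_has_vector_derivative has_vector_derivative_at_within)
  next
    show "continuous_on {0..b} (\<lambda>x. 1 / ((x + t)^2 + 1))"
      using nz0 by (intro continuous_intros) auto
  qed
  then show ?thesis by simp
qed

lemma FTC_k2: "(\<integral>x. indicator {0..b} x * (2 * (x + t) / ((x + t)^2 + 1)^2) \<partial>lborel) = 1 / (t^2 + 1) - 1 / ((b + t)^2 + 1)"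
  if "0 \<le> b" for b t :: real
proof -
  have "(\<integral>x. indicator {0..b} x *\<^sub>R (2 * (x + t) / ((x + t)^2 + 1)^2) \<partial>lborel) = (- 1 / ((b + t)^2 + 1)) - (- 1 / ((0 + t)^2 + 1))"
  proof (rule integral_FTC_atLeastAtMost[OF that, where F = "\<lambda>x. - 1 / ((x + t)^2 + 1)"])
    fix x assume "0 \<le> x" "x \<le> b"
    have nz: "(x + t)^2 + 1 \<noteq> 0" by (rule nz0)
    have d: "((\<lambda>x. (x + t)^2 + 1) has_real_derivative 2 * (x + t)) (at x)"
      by (auto intro!: derivative_eq_intros)
    have "((\<lambda>x. - inverse ((x + t)^2 + 1)) has_real_derivative - (- (2 * (x + t) * inverse (((x + t)^2 + 1) ^ Suc (Suc 0))))) (at x)"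
      by (rule DERIV_minus[OF DERIV_inverse_fun[OF d nz]])
    moreover have "(\<lambda>x. - inverse ((x + t)^2 + 1)) = (\<lambda>x. - 1 / ((x + t)^2 + 1))"
      by (simp add: inverse_eq_divide)
    moreover have "- (- (2 * (x + t) * inverse (((x + t)^2 + 1) ^ Suc (Suc 0)))) = 2 * (x + t) / ((x + t)^2 + 1)^2"
      by (simp add: divide_inverse numeral_2_eq_2)
    ultimately have "((\<lambda>x. - 1 / ((x + t)^2 + 1)) has_real_derivative (2 * (x + t) / ((x + t)^2 + 1)^2)) (at x)"
      by simp
    then show "((\<lambda>x. - 1 / ((x + t)^2 + 1)) has_vector_derivative (2 * (x + t) / ((x + t)^2 + 1)^2)) (at x within {0..b})"
      by (simp add: has_real_derivative_iff_has_vector_derivative has_vector_derivative_at_within)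
  next
    show "continuous_on {0..b} (\<lambda>x. 2 * (x + t) / ((x + t)^2 + 1)^2)"
      using nz0 by (intro continuous_intros) auto
  qed
  then show ?thesis by simp
qed

lemma fubini_strip:
  fixes g :: "real \<Rightarrow> real \<Rightarrow> real"
  assumes M: "M \<in> M_plus 2" and b: "0 \<le> b" and B: "0 \<le> B"
    and g: "(\<lambda>(x,t). g x t) \<in> borel_measurable (borel \<Otimes>\<^sub>M borel)"
    and bound: "\<And>x t. x \<in> {0..b} \<Longrightarrow> \<bar>g x t\<bar> \<le> B * (1 + \<bar>t\<bar>) powr (-2)"
  shows "(\<integral>x. indicator {0..b} x * (\<integral>t. g x t \<partial>M) \<partial>lborel) = (\<integral>t. (\<integral>x. indicator {0..b} x * g x t \<partial>lborel) \<partial>M)"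
    and "integrable M (\<lambda>t. \<integral>x. indicator {0..b} x * g x t \<partial>lborel)"
proof -
  have sM: "sets M = sets borel" using M by (simp add: M_plus_def)
  interpret M: sigma_finite_measure M using Mplus_sigma_finite[OF M] by simp
  interpret P: pair_sigma_finite lborel M
    by (simp add: pair_sigma_finite_def lborel.sigma_finite_measure_axioms M.sigma_finite_measure_axioms)
  define f where "f = (\<lambda>x t. indicator {0..b} x * g x t)"
  have sets: "sets (lborel \<Otimes>\<^sub>M M) = sets (borel \<Otimes>\<^sub>M borel)"
    by (rule sets_pair_measure_cong) (simp_all add: sM)
  have gm: "(\<lambda>p. g (fst p) (snd p)) \<in> borel_measurable (borel \<Otimes>\<^sub>M borel)"
    using g by (simp add: case_prod_beta')
  have fm: "(\<lambda>(x,t). f x t) \<in> borel_measurable (lborel \<Otimes>\<^sub>M M)"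
    unfolding measurable_cong_sets[OF sets refl] f_def case_prod_beta' using gm by measurable
  define K where "K = (\<integral>\<^sup>+ t. ennreal ((1 + \<bar>t\<bar>) powr (- 2)) \<partial>M)"
  have K: "K < \<infinity>" using M by (simp add: M_plus_def K_def)
  have wm: "(\<lambda>t. ennreal ((1 + \<bar>t\<bar>) powr (- 2))) \<in> borel_measurable M"
    unfolding measurable_cong_sets[OF sM refl] by measurable
  have hm: "(\<lambda>p. ennreal (indicator {0..b} (fst p) * (B * (1 + \<bar>snd p\<bar>) powr (-2)))) \<in> borel_measurable (lborel \<Otimes>\<^sub>M M)"
    unfolding measurable_cong_sets[OF sets refl] by measurable
  have int: "integrable (lborel \<Otimes>\<^sub>M M) (\<lambda>(x,t). f x t)"
  proof (rule integrableI_bounded[OF fm])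
    have "(\<integral>\<^sup>+p. ennreal (norm ((\<lambda>(x,t). f x t) p)) \<partial>(lborel \<Otimes>\<^sub>M M))
        \<le> (\<integral>\<^sup>+p. ennreal (indicator {0..b} (fst p) * (B * (1 + \<bar>snd p\<bar>) powr (-2))) \<partial>(lborel \<Otimes>\<^sub>M M))"
      by (intro nn_integral_mono ennreal_leI) (auto simp: f_def bound split: split_indicator)
    also have "\<dots> = (\<integral>\<^sup>+x. \<integral>\<^sup>+t. ennreal (indicator {0..b} x * (B * (1 + \<bar>t\<bar>) powr (-2))) \<partial>M \<partial>lborel)"
      using M.nn_integral_fst[OF hm] by simp
    also have "\<dots> = (\<integral>\<^sup>+x. (ennreal B * K) * indicator {0..b} x \<partial>lborel)"
    proof (rule nn_integral_cong)
      fix x :: real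
      show "(\<integral>\<^sup>+t. ennreal (indicator {0..b} x * (B * (1 + \<bar>t\<bar>) powr (-2))) \<partial>M) = (ennreal B * K) * indicator {0..b} x"
        using B by (auto simp: K_def ennreal_mult nn_integral_cmult[OF wm] split: split_indicator)
    qed
    also have "\<dots> = ennreal B * K * ennreal b"
      using b by (simp add: nn_integral_cmult_indicator)
    also have "\<dots> < \<infinity>" using K by (simp add: ennreal_mult_less_top)
    finally show "(\<integral>\<^sup>+p. ennreal (norm ((\<lambda>(x,t). f x t) p)) \<partial>(lborel \<Otimes>\<^sub>M M)) < \<infinity>" .
  qed
  have "(\<integral>t. (\<integral>x. f x t \<partial>lborel) \<partial>M) = (\<integral>x. (\<integral>t. f x t \<partial>M) \<partial>lborel)"
    by (rule P.Fubini_integral[OF int])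
  then show "(\<integral>x. indicator {0..b} x * (\<integral>t. g x t \<partial>M) \<partial>lborel) = (\<integral>t. (\<integral>x. indicator {0..b} x * g x t \<partial>lborel) \<partial>M)"
    by (simp add: f_def)
  show "integrable M (\<lambda>t. \<integral>x. indicator {0..b} x * g x t \<partial>lborel)"
    using P.integrable_snd[OF int] by (simp add: f_def)
qed

lemma only_if_dir:
  assumes nu: "\<nu> \<in> M_plus 1" and mu: "\<mu> \<in> M_plus 2"
    and eq: "\<forall>z. Im z > 0 \<longrightarrow> C_transform 1 \<nu> z = C_transform 2 \<mu> z"
  shows "emeasure \<nu> {..0} < \<infinity>"
proof -
  have nu2: "\<nu> \<in> M_plus 2" by (rule Mplus_mono12[OF nu])
  have sN: "sets \<nu> = sets borel" using nu by (simp add: M_plus_def)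
  have spN: "space \<nu> = UNIV" using sets_eq_imp_space_eq[OF sN] by simp
  define P where "P x = (\<integral>t. 1 / ((x + t)^2 + 1) \<partial>\<nu>)" for x :: real
  define Q where "Q x = (\<integral>t. 2 * (x + t) / ((x + t)^2 + 1)^2 \<partial>\<mu>)" for x :: real
  have PQ: "P x = Q x" for x
  proof -
    let ?z = "Complex x 1"
    have z: "Im ?z > 0" by simp
    have i1: "integrable \<nu> (\<lambda>t. 1 / (?z + of_real t) ^ 1)"
      using C_integrable[of \<nu> 1 ?z] nu z by simp
    have i2: "integrable \<mu> (\<lambda>t. 1 / (?z + of_real t) ^ 2)"
      using C_integrable[of \<mu> 2 ?z] mu z by simp
    have "(\<integral>t. Im (1 / (?z + of_real t) ^ 1) \<partial>\<nu>) = Im (C_transform 1 \<nu> ?z)"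
      unfolding C_transform_def by (rule integral_Im[OF i1])
    moreover have "(\<integral>t. Im (1 / (?z + of_real t) ^ 2) \<partial>\<mu>) = Im (C_transform 2 \<mu> ?z)"
      unfolding C_transform_def by (rule integral_Im[OF i2])
    moreover have "(\<integral>t. Im (1 / (?z + of_real t) ^ 1) \<partial>\<nu>) = - P x"
      by (simp add: P_def Complex_add_real Im_inv1)
    moreover have "(\<integral>t. Im (1 / (?z + of_real t) ^ 2) \<partial>\<mu>) = (\<integral>t. - (2 * (x + t) / ((x + t)^2 + 1)^2) \<partial>\<mu>)"
      by (rule Bochner_Integration.integral_cong) (simp_all add: Complex_add_real Im_inv2 minus_divide_left)
    moreover have "(\<integral>t. - (2 * (x + t) / ((x + t)^2 + 1)^2) \<partial>\<mu>) = - Q x"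
      unfolding Q_def by (rule integral_minus)
    ultimately show ?thesis using eq z by simp
  qed
  define K where "K = (\<integral>t. 1 / (t^2 + 1) \<partial>\<mu>)"
  have intK: "integrable \<mu> (\<lambda>t. 1 / (t^2 + 1))"
  proof -
    have sM: "sets \<mu> = sets borel" using mu by (simp add: M_plus_def)
    have i1: "integrable \<mu> (\<lambda>t. 4 * (1 + \<bar>t\<bar>) powr (- 2))"
      using Mplus_weight_integrable[OF mu] by simp
    have i2: "(\<lambda>t. 1 / (t^2 + 1)) \<in> borel_measurable \<mu>"
      unfolding measurable_cong_sets[OF sM refl] by measurable
    have i3: "AE t in \<mu>. norm (1 / (t^2 + 1)) \<le> norm (4 * (1 + \<bar>t\<bar>) powr (- 2))"
    proof (rule AE_I2)
      fix t :: real
      have "1 / ((0 + t)^2 + 1) \<le> (4 + 4 * 0^2) * (1 + \<bar>t\<bar>) powr (-2)"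
        by (rule k1_bound) simp
      moreover have "0 < t^2 + 1" by (smt (verit) zero_le_power2)
      ultimately show "norm (1 / (t^2 + 1)) \<le> norm (4 * (1 + \<bar>t\<bar>) powr (- 2))" by simp
    qed
    show ?thesis by (rule Bochner_Integration.integrable_bound[OF i1 i2 i3])
  qed
  have bnd: "(pi / 4) * measure \<nu> {- real N..0} \<le> K" if N: "N \<ge> 1" for N :: nat
  proof -
    define b where "b = 2 * real N"
    have b0: "0 \<le> b" by (simp add: b_def)
    have m1: "(\<lambda>(x,t). 1 / ((x + t)^2 + 1 :: real)) \<in> borel_measurable (borel \<Otimes>\<^sub>M borel)"
      by measurable
    have m2: "(\<lambda>(x,t). 2 * (x + t) / ((x + t)^2 + 1 :: real)^2) \<in> borel_measurable (borel \<Otimes>\<^sub>M borel)"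
      by measurable
    have bd1: "\<bar>1 / ((x + t)^2 + 1)\<bar> \<le> (4 + 4 * b^2) * (1 + \<bar>t\<bar>) powr (-2)" if "x \<in> {0..b}" for x t :: real
    proof -
      have "0 < (x + t)^2 + 1" by (smt (verit) zero_le_power2)
      then show ?thesis using k1_bound[OF that, of t] by simp
    qed
    have bd2: "\<bar>2 * (x + t) / ((x + t)^2 + 1)^2\<bar> \<le> (4 + 4 * b^2) * (1 + \<bar>t\<bar>) powr (-2)" if "x \<in> {0..b}" for x t :: real
      using k2_bound[of "x + t"] k1_bound[OF that, of t] by linarith
    have B0: "0 \<le> 4 + 4 * b^2" by simp
    note f1 = fubini_strip[where g="\<lambda>x t. 1 / ((x + t)^2 + 1)", OF nu2 b0 B0 m1 bd1]
    note f2 = fubini_strip[where g="\<lambda>x t. 2 * (x + t) / ((x + t)^2 + 1)^2", OF mu b0 B0 m2 bd2]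
    have e1: "(\<lambda>t. \<integral>x. indicator {0..b} x * (1 / ((x + t)^2 + 1)) \<partial>lborel) = (\<lambda>t. arctan (b + t) - arctan t)"
      using FTC_k1[OF b0] by simp
    have e2: "(\<lambda>t. \<integral>x. indicator {0..b} x * (2 * (x + t) / ((x + t)^2 + 1)^2) \<partial>lborel) = (\<lambda>t. 1 / (t^2 + 1) - 1 / ((b + t)^2 + 1))"
      using FTC_k2[OF b0] by simp
    have int1: "integrable \<nu> (\<lambda>t. arctan (b + t) - arctan t)" using f1(2) unfolding e1 .
    have int2: "integrable \<mu> (\<lambda>t. 1 / (t^2 + 1) - 1 / ((b + t)^2 + 1))" using f2(2) unfolding e2 .
    have "(\<integral>t. (arctan (b + t) - arctan t) \<partial>\<nu>) = (\<integral>x. indicator {0..b} x * P x \<partial>lborel)"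
      using f1(1) unfolding e1 P_def by simp
    also have "\<dots> = (\<integral>x. indicator {0..b} x * Q x \<partial>lborel)" by (simp add: PQ)
    also have "\<dots> = (\<integral>t. (1 / (t^2 + 1) - 1 / ((b + t)^2 + 1)) \<partial>\<mu>)"
      using f2(1) unfolding e2 Q_def by simp
    also have "\<dots> \<le> K" unfolding K_def
    proof (rule integral_mono[OF int2 intK])
      fix t :: real
      have "0 < (b + t)^2 + 1" by (smt (verit) zero_le_power2)
      then show "1 / (t^2 + 1) - 1 / ((b + t)^2 + 1) \<le> 1 / (t^2 + 1)" by simp
    qed
    finally have up: "(\<integral>t. (arctan (b + t) - arctan t) \<partial>\<nu>) \<le> K" .
    define A where "A = {- real N..0}"
    have A_sets: "A \<in> sets \<nu>" using sN by (simp add: A_def)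
    have A_fin: "emeasure \<nu> A < \<infinity>"
      by (rule Mplus_bounded_finite[OF nu _ _ _, of A "real N"]) (auto simp: A_def)
    have intA: "integrable \<nu> (\<lambda>t. (pi / 4) * indicator A t)"
      using A_sets A_fin by (intro integrable_mult_right integrable_real_indicator)
    have low: "(pi / 4) * indicator A t \<le> arctan (b + t) - arctan t" for t :: real
    proof (cases "t \<in> A")
      case True
      then have t: "- real N \<le> t" "t \<le> 0" by (auto simp: A_def)
      have "1 \<le> b + t" using t N by (simp add: b_def)
      then have "arctan 1 \<le> arctan (b + t)" by (rule arctan_monotone')
      then have a1: "pi / 4 \<le> arctan (b + t)" by (simp add: arctan_one)
      have a2: "arctan t \<le> 0" using t by (simp add: arctan_le_zero_iff)
      have ind: "indicator A t = (1::real)" using True by simp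
      show ?thesis unfolding ind using a1 a2 by linarith
    next
      case False
      have "arctan t \<le> arctan (b + t)" using b0 by (simp add: arctan_le_iff)
      then show ?thesis using False by simp
    qed
    have "(\<integral>t. (pi / 4) * indicator A t \<partial>\<nu>) \<le> (\<integral>t. (arctan (b + t) - arctan t) \<partial>\<nu>)"
      by (rule integral_mono[OF intA int1 low])
    moreover have "(\<integral>t. (pi / 4) * indicator A t \<partial>\<nu>) = (pi / 4) * measure \<nu> A"
      by (simp add: spN)
    ultimately show ?thesis using up by (simp add: A_def)
  qed
  define L where "L = K * 4 / pi"
  have bndE: "emeasure \<nu> {- real (Suc N)..0} \<le> ennreal L" for N :: nat
  proof -
    have fin: "emeasure \<nu> {- real (Suc N)..0} < \<infinity>"
      by (rule Mplus_bounded_finite[OF nu _ _ _, of _ "real (Suc N)"]) auto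
    have "measure \<nu> {- real (Suc N)..0} \<le> L"
      using bnd[of "Suc N"] pi_gt_zero by (simp add: L_def field_simps)
    then show ?thesis using fin by (simp add: emeasure_eq_ennreal_measure less_top[symmetric] ennreal_leI)
  qed
  have un: "(\<Union>N. {- real (Suc N)..0}) = {..(0::real)}"
  proof (rule set_eqI, rule iffI)
    fix x :: real assume "x \<in> {..0}"
    obtain n :: nat where "- x \<le> real n" using real_arch_simple by blast
    then have "x \<in> {- real (Suc n)..0}" using \<open>x \<in> {..0}\<close> by auto
    then show "x \<in> (\<Union>N. {- real (Suc N)..0})" by blast
  qed auto
  have inc: "incseq (\<lambda>N. {- real (Suc N)..(0::real)})"
  proof (rule incseq_SucI)
    fix N :: nat
    show "{- real (Suc N)..0} \<subseteq> {- real (Suc (Suc N))..(0::real)}"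
    proof
      fix x :: real assume "x \<in> {- real (Suc N)..0}"
      then have "- real (Suc N) \<le> x" "x \<le> 0" by auto
      then show "x \<in> {- real (Suc (Suc N))..0}" by simp
    qed
  qed
  have "emeasure \<nu> {..0} = (SUP N. emeasure \<nu> {- real (Suc N)..0})"
  proof -
    have rs: "range (\<lambda>N. {- real (Suc N)..(0::real)}) \<subseteq> sets \<nu>" unfolding sN by (simp add: image_subset_iff)
    have "(SUP N. emeasure \<nu> {- real (Suc N)..0}) = emeasure \<nu> (\<Union>N. {- real (Suc N)..(0::real)})"
      by (rule SUP_emeasure_incseq[OF rs inc])
    then show ?thesis unfolding un by (rule sym)
  qed
  also have "\<dots> \<le> ennreal L" by (rule SUP_least) (rule bndE)
  also have "\<dots> < \<infinity>" by simp
  finally show ?thesis .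
qed

lemma lim_inv_abs: "((\<lambda>s::real. 1 / (1 + \<bar>s\<bar>)) \<longlongrightarrow> 0) at_top"
proof -
  have "filterlim (\<lambda>s::real. 1 + \<bar>s\<bar>) at_top at_top"
    by (rule filterlim_at_top_mono[OF filterlim_ident]) (intro always_eventually allI, smt (verit) abs_ge_self)
  then have "((\<lambda>s::real. inverse (1 + \<bar>s\<bar>)) \<longlongrightarrow> 0) at_top"
    by (rule tendsto_inverse_0_at_top)
  then show ?thesis by (simp add: inverse_eq_divide)
qed

lemma lim_inv_lin: "((\<lambda>s::real. - inverse (1 + s)) \<longlongrightarrow> 0) at_top"
proof -
  have "filterlim (\<lambda>s::real. 1 + s) at_top at_top"
    by (rule filterlim_at_top_mono[OF filterlim_ident]) auto
  then have "((\<lambda>s::real. inverse (1 + s)) \<longlongrightarrow> 0) at_top"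
    by (rule tendsto_inverse_0_at_top)
  then show ?thesis using tendsto_minus by fastforce
qed

lemma G_bound:
  fixes t :: real
  shows "(\<integral>\<^sup>+s. ennreal (if t < s then (1 + \<bar>s\<bar>) powr (-2) else 0) \<partial>lborel)
           \<le> ennreal pi * indicator {..0} t + ennreal ((1 + \<bar>t\<bar>) powr (-1))"
proof (cases "0 \<le> t")
  case True
  have "(\<integral>\<^sup>+s. ennreal (if t < s then (1 + \<bar>s\<bar>) powr (-2) else 0) \<partial>lborel)
        \<le> (\<integral>\<^sup>+s. ennreal (1 / (1 + s)^2) * indicator {t..} s \<partial>lborel)"
  proof (rule nn_integral_mono)
    fix s :: real
    show "ennreal (if t < s then (1 + \<bar>s\<bar>) powr (-2) else 0) \<le> ennreal (1 / (1 + s)^2) * indicator {t..} s"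
    proof (cases "t < s")
      case True
      then have "\<bar>s\<bar> = s" using \<open>0 \<le> t\<close> by simp
      then have "(1 + \<bar>s\<bar>) powr (-2) = 1 / (1 + s)^2" using w2_eq[of s] by simp
      then show ?thesis using True by simp
    qed simp
  qed
  also have "\<dots> = ennreal (0 - (- inverse (1 + t)))"
  proof (rule nn_integral_FTC_atLeast)
    show "(\<lambda>s::real. 1 / (1 + s)^2) \<in> borel_measurable borel" by measurable
    show "DERIV (\<lambda>s. - inverse (1 + s)) s :> 1 / (1 + s)^2" if "t \<le> s" for s
    proof -
      have "1 + s \<noteq> 0" using that True by simp
      then show ?thesis
        by (auto intro!: derivative_eq_intros simp: field_simps power2_eq_square)
    qed
    show "0 \<le> 1 / (1 + s)^2" for s :: real by simp
    show "((\<lambda>s::real. - inverse (1 + s)) \<longlongrightarrow> 0) at_top" by (rule lim_inv_lin)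
  qed
  also have "\<dots> = ennreal ((1 + \<bar>t\<bar>) powr (-1))"
    using True by (simp add: w1_eq inverse_eq_divide)
  also have "\<dots> \<le> ennreal pi * indicator {..0} t + ennreal ((1 + \<bar>t\<bar>) powr (-1))"
    by simp
  finally show ?thesis .
next
  case False
  have "(\<integral>\<^sup>+s. ennreal (if t < s then (1 + \<bar>s\<bar>) powr (-2) else 0) \<partial>lborel)
        \<le> (\<integral>\<^sup>+s. ennreal (inverse (1 + s^2)) * indicator {t..} s \<partial>lborel)"
  proof (rule nn_integral_mono)
    fix s :: real
    have "1 + s^2 \<le> (1 + \<bar>s\<bar>)^2"
      by (simp add: power2_eq_square algebra_simps)
    moreover have "0 < 1 + s^2" by (smt (verit) zero_le_power2)
    ultimately have "1 / (1 + \<bar>s\<bar>)^2 \<le> inverse (1 + s^2)"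
      by (simp add: inverse_eq_divide frac_le)
    then show "ennreal (if t < s then (1 + \<bar>s\<bar>) powr (-2) else 0) \<le> ennreal (inverse (1 + s^2)) * indicator {t..} s"
      by (auto simp: w2_eq split: split_indicator intro!: ennreal_leI)
  qed
  also have "\<dots> = ennreal (pi / 2 - arctan t)"
  proof (rule nn_integral_FTC_atLeast)
    show "(\<lambda>s::real. inverse (1 + s^2)) \<in> borel_measurable borel" by measurable
    show "DERIV arctan s :> inverse (1 + s^2)" for s :: real by (rule DERIV_arctan)
    show "0 \<le> inverse (1 + s^2)" for s :: real by (smt (verit) inverse_nonnegative_iff_nonnegative zero_le_power2)
    show "(arctan \<longlongrightarrow> pi / 2) at_top" by (rule tendsto_arctan_at_top)
  qed
  also have "\<dots> \<le> ennreal pi"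
    using arctan_bounded[of t] by (intro ennreal_leI) simp
  also have "\<dots> \<le> ennreal pi * indicator {..0} t + ennreal ((1 + \<bar>t\<bar>) powr (-1))"
    using False by simp
  finally show ?thesis .
qed

lemma if_dir:
  assumes nu: "\<nu> \<in> M_plus 1" and fin0: "emeasure \<nu> {..0} < \<infinity>"
  shows "\<exists>\<mu> \<in> M_plus 2. \<forall>z. Im z > 0 \<longrightarrow> C_transform 1 \<nu> z = C_transform 2 \<mu> z"
proof -
  have sN: "sets \<nu> = sets borel" using nu by (simp add: M_plus_def)
  have spN: "space \<nu> = UNIV" using sets_eq_imp_space_eq[OF sN] by simp
  interpret N: sigma_finite_measure \<nu> using Mplus_sigma_finite[OF nu] by simp
  interpret P: pair_sigma_finite lborel \<nu>
    by (simp add: pair_sigma_finite_def lborel.sigma_finite_measure_axioms N.sigma_finite_measure_axioms)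
  have sets: "sets (lborel \<Otimes>\<^sub>M \<nu>) = sets (borel \<Otimes>\<^sub>M borel)"
    by (rule sets_pair_measure_cong) (simp_all add: sN)
  have finS: "emeasure \<nu> {..<s} < \<infinity>" for s :: real
  proof -
    have "{..<s} \<subseteq> {..0} \<union> {-\<bar>s\<bar>..\<bar>s\<bar>}" by auto
    then have "emeasure \<nu> {..<s} \<le> emeasure \<nu> ({..0} \<union> {-\<bar>s\<bar>..\<bar>s\<bar>})"
      by (rule emeasure_mono) (simp add: sN)
    also have "\<dots> \<le> emeasure \<nu> {..0} + emeasure \<nu> {-\<bar>s\<bar>..\<bar>s\<bar>}"
      by (rule emeasure_subadditive) (simp_all add: sN)
    also have "\<dots> < \<infinity>"
      using fin0 Mplus_bounded_finite[OF nu _ _ _, of "{-\<bar>s\<bar>..\<bar>s\<bar>}" "\<bar>s\<bar>"] by simp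
    finally show ?thesis .
  qed
  define F where "F s = measure \<nu> {..<s}" for s :: real
  have F_eq: "ennreal (F s) = emeasure \<nu> {..<s}" for s
    using emeasure_eq_ennreal_measure[of \<nu> "{..<s}"] finS[of s] by (simp add: F_def)
  have F0: "0 \<le> F s" for s by (simp add: F_def)
  have Fmono: "mono F"
  proof (rule monoI)
    fix x y :: real assume "x \<le> y"
    then show "F x \<le> F y" unfolding F_def
      using finS[of y] sN by (intro measure_mono_fmeasurable) (auto simp: fmeasurable_def)
  qed
  have Fm: "F \<in> borel_measurable borel" by (rule borel_measurable_mono[OF Fmono])
  define \<mu> where "\<mu> = density lborel (\<lambda>s. ennreal (F s))"
  define w where "w s = (1 + \<bar>s\<bar>) powr (-2)" for s :: real
  define k0 where "k0 s t = ennreal (if t < s then w s else 0)" for s t :: real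
  have k0m: "(\<lambda>(s,t). k0 s t) \<in> borel_measurable (lborel \<Otimes>\<^sub>M \<nu>)"
    unfolding measurable_cong_sets[OF sets refl] k0_def w_def by measurable
  have k0m': "(\<lambda>p. k0 (fst p) (snd p)) \<in> borel_measurable (lborel \<Otimes>\<^sub>M \<nu>)"
    using k0m by (simp add: case_prod_beta')
  have inner_t: "(\<integral>\<^sup>+t. k0 s t \<partial>\<nu>) = ennreal (F s) * ennreal (w s)" for s
  proof -
    have "(\<lambda>t. k0 s t) = (\<lambda>t. ennreal (w s) * indicator {..<s} t)"
      by (auto simp: k0_def split: split_indicator)
    then have "(\<integral>\<^sup>+t. k0 s t \<partial>\<nu>) = ennreal (w s) * emeasure \<nu> {..<s}"
      using sN by (simp add: nn_integral_cmult_indicator)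
    then show ?thesis by (simp add: F_eq mult.commute)
  qed
  define H where "H t = ennreal pi * indicator {..0} t + ennreal ((1 + \<bar>t\<bar>) powr (-1))" for t :: real
  have G_le: "(\<integral>\<^sup>+s. k0 s t \<partial>lborel) \<le> H t" for t
    unfolding k0_def w_def H_def by (rule G_bound)
  have H_int: "(\<integral>\<^sup>+t. H t \<partial>\<nu>) < \<infinity>"
  proof -
    have m1: "(\<lambda>t. ennreal pi * indicator {..0::real} t) \<in> borel_measurable \<nu>"
      unfolding measurable_cong_sets[OF sN refl] by measurable
    have m2: "(\<lambda>t. ennreal ((1 + \<bar>t\<bar>) powr (-1))) \<in> borel_measurable \<nu>"
      unfolding measurable_cong_sets[OF sN refl] by measurable
    have "(\<integral>\<^sup>+t. H t \<partial>\<nu>) = (\<integral>\<^sup>+t. ennreal pi * indicator {..0} t \<partial>\<nu>) + (\<integral>\<^sup>+t. ennreal ((1 + \<bar>t\<bar>) powr (-1)) \<partial>\<nu>)"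
      unfolding H_def by (rule nn_integral_add[OF m1 m2])
    also have "\<dots> = ennreal pi * emeasure \<nu> {..0} + (\<integral>\<^sup>+t. ennreal ((1 + \<bar>t\<bar>) powr (-1)) \<partial>\<nu>)"
      using sN by (simp add: nn_integral_cmult_indicator)
    also have "\<dots> < \<infinity>"
      using fin0 nu by (simp add: M_plus_def ennreal_mult_less_top)
    finally show ?thesis .
  qed
  have I_eq: "(\<integral>\<^sup>+t. (\<integral>\<^sup>+s. k0 s t \<partial>lborel) \<partial>\<nu>) = (\<integral>\<^sup>+s. (\<integral>\<^sup>+t. k0 s t \<partial>\<nu>) \<partial>lborel)"
    by (rule P.Fubini'[OF k0m])
  have KB: "(\<integral>\<^sup>+s. ennreal (F s) * ennreal (w s) \<partial>lborel) < \<infinity>"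
  proof -
    have "(\<integral>\<^sup>+s. ennreal (F s) * ennreal (w s) \<partial>lborel) = (\<integral>\<^sup>+s. (\<integral>\<^sup>+t. k0 s t \<partial>\<nu>) \<partial>lborel)"
      by (simp add: inner_t)
    also have "\<dots> = (\<integral>\<^sup>+t. (\<integral>\<^sup>+s. k0 s t \<partial>lborel) \<partial>\<nu>)" by (rule I_eq[symmetric])
    also have "\<dots> \<le> (\<integral>\<^sup>+t. H t \<partial>\<nu>)" by (intro nn_integral_mono G_le)
    also have "\<dots> < \<infinity>" by (rule H_int)
    finally show ?thesis .
  qed
  have prodfin: "(\<integral>\<^sup>+p. k0 (fst p) (snd p) \<partial>(lborel \<Otimes>\<^sub>M \<nu>)) < \<infinity>"
  proof -
    have "(\<integral>\<^sup>+p. k0 (fst p) (snd p) \<partial>(lborel \<Otimes>\<^sub>M \<nu>)) = (\<integral>\<^sup>+s. (\<integral>\<^sup>+t. k0 s t \<partial>\<nu>) \<partial>lborel)"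
      using N.nn_integral_fst[OF k0m'] by simp
    also have "\<dots> = (\<integral>\<^sup>+s. ennreal (F s) * ennreal (w s) \<partial>lborel)" by (simp add: inner_t)
    finally show ?thesis using KB by simp
  qed
  have sMu: "sets \<mu> = sets borel" by (simp add: \<mu>_def)
  have muM: "\<mu> \<in> M_plus 2"
  proof -
    have "(\<integral>\<^sup>+ t. ennreal ((1 + \<bar>t\<bar>) powr (- 2)) \<partial>\<mu>) = (\<integral>\<^sup>+s. ennreal (F s) * ennreal (w s) \<partial>lborel)"
      unfolding \<mu>_def w_def using Fm by (subst nn_integral_density) auto
    then show ?thesis using KB sMu by (simp add: M_plus_def)
  qed
  have eqz: "C_transform 1 \<nu> z = C_transform 2 \<mu> z" if z: "Im z > 0" for z
  proof -
    obtain C where C: "C > 0" "\<And>s::real. cmod (1 / (z + of_real s) ^ 2) \<le> C * (1 + \<bar>s\<bar>) powr (- real 2)"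
      using norm_inv_pow_bound[OF z, of 2] by blast
    obtain C1 where C1: "C1 > 0" "\<And>s::real. cmod (1 / (z + of_real s) ^ 1) \<le> C1 * (1 + \<bar>s\<bar>) powr (- real 1)"
      using norm_inv_pow_bound[OF z, of 1] by blast
    have nz: "z + of_real s \<noteq> 0" for s :: real
    proof
      assume "z + of_real s = 0"
      then have "Im (z + of_real s) = 0" by simp
      then show False using z by simp
    qed
    define g where "g s = 1 / (z + of_real s)^2" for s :: real
    have gC: "cmod (g s) \<le> C * w s" for s using C(2)[of s] by (simp add: g_def w_def)
    have gC': "ennreal (cmod (g s)) \<le> ennreal C * ennreal (w s)" for s
    proof -
      have "ennreal (cmod (g s)) \<le> ennreal (C * w s)" using gC[of s] by (rule ennreal_leI)
      also have "\<dots> = ennreal C * ennreal (w s)" using C(1) by (simp add: ennreal_mult w_def)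
      finally show ?thesis .
    qed
    define h where "h s t = (if t < s then g s else 0)" for s t :: real
    have hm: "(\<lambda>(s,t). h s t) \<in> borel_measurable (lborel \<Otimes>\<^sub>M \<nu>)"
      unfolding measurable_cong_sets[OF sets refl] h_def g_def by measurable
    have hint: "integrable (lborel \<Otimes>\<^sub>M \<nu>) (\<lambda>(s,t). h s t)"
    proof (rule integrableI_bounded[OF hm])
      have "(\<integral>\<^sup>+p. ennreal (norm ((\<lambda>(s,t). h s t) p)) \<partial>(lborel \<Otimes>\<^sub>M \<nu>))
          \<le> (\<integral>\<^sup>+p. ennreal C * k0 (fst p) (snd p) \<partial>(lborel \<Otimes>\<^sub>M \<nu>))"
      proof (rule nn_integral_mono)
        fix p :: "real \<times> real"
        show "ennreal (norm ((\<lambda>(s,t). h s t) p)) \<le> ennreal C * k0 (fst p) (snd p)"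
          using gC'[of "fst p"] by (cases p) (auto simp: h_def k0_def)
      qed
      also have "\<dots> = ennreal C * (\<integral>\<^sup>+p. k0 (fst p) (snd p) \<partial>(lborel \<Otimes>\<^sub>M \<nu>))"
        by (rule nn_integral_cmult[OF k0m'])
      also have "\<dots> < \<infinity>" using prodfin by (simp add: ennreal_mult_less_top)
      finally show "(\<integral>\<^sup>+p. ennreal (norm ((\<lambda>(s,t). h s t) p)) \<partial>(lborel \<Otimes>\<^sub>M \<nu>)) < \<infinity>" .
    qed
    have fub: "(\<integral>t. (\<integral>s. h s t \<partial>lborel) \<partial>\<nu>) = (\<integral>s. (\<integral>t. h s t \<partial>\<nu>) \<partial>lborel)"
      by (rule P.Fubini_integral[OF hint])
    have inner1: "(\<integral>t. h s t \<partial>\<nu>) = F s *\<^sub>R g s" for s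
    proof -
      have "(\<lambda>t. h s t) = (\<lambda>t. indicator {..<s} t *\<^sub>R g s)"
        by (auto simp: h_def split: split_indicator)
      moreover have "integrable \<nu> (indicator {..<s} :: real \<Rightarrow> real)"
        using finS[of s] sN by (intro integrable_real_indicator) auto
      ultimately show ?thesis by (simp add: F_def spN)
    qed
    have inner2: "(\<integral>s. h s t \<partial>lborel) = 1 / (z + of_real t)" for t
    proof -
      define Fz where "Fz s = - 1 / (z + of_real s)" for s :: real
      have Fz_cont: "isCont Fz s" for s
        unfolding Fz_def using nz[of s] by (intro continuous_intros) auto
      have si: "set_integrable lborel (einterval (ereal t) \<infinity>) g"
        unfolding set_integrable_def einterval_eq_Ici
      proof (rule integrableI_bounded)
        show "(\<lambda>s. indicator {t<..} s *\<^sub>R g s) \<in> borel_measurable lborel"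
          unfolding g_def by measurable
        have "(\<integral>\<^sup>+s. ennreal (norm (indicator {t<..} s *\<^sub>R g s)) \<partial>lborel) \<le> (\<integral>\<^sup>+s. ennreal C * k0 s t \<partial>lborel)"
        proof (rule nn_integral_mono)
          fix s :: real
          show "ennreal (norm (indicator {t<..} s *\<^sub>R g s)) \<le> ennreal C * k0 s t"
            using gC'[of s] by (auto simp: k0_def split: split_indicator)
        qed
        also have "\<dots> = ennreal C * (\<integral>\<^sup>+s. k0 s t \<partial>lborel)"
        proof -
          have k0t: "(\<lambda>s. k0 s t) \<in> borel_measurable lborel" unfolding k0_def w_def by measurable
          show ?thesis by (rule nn_integral_cmult[OF k0t])
        qed
        also have "\<dots> \<le> ennreal C * H t" by (intro mult_left_mono G_le) simp
        also have "\<dots> < \<infinity>"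
        proof -
          have "H t < \<infinity>" by (simp add: H_def split: split_indicator)
          then show ?thesis by (simp add: ennreal_mult_less_top)
        qed
        finally show "(\<integral>\<^sup>+s. ennreal (norm (indicator {t<..} s *\<^sub>R g s)) \<partial>lborel) < \<infinity>" .
      qed
      have "(LBINT s=ereal t..\<infinity>. g s) = 0 - Fz t"
      proof (rule interval_integral_FTC_integrable[where F = Fz])
        show "ereal t < \<infinity>" by simp
        show "(Fz has_vector_derivative g s) (at s)" for s
        proof -
          have "((\<lambda>w. - 1 / (z + w)) has_field_derivative 1 / (z + of_real s)^2) (at (of_real s))"
            using nz[of s] by (auto intro!: derivative_eq_intros simp: power2_eq_square field_simps)
          then show ?thesis unfolding Fz_def g_def by (rule has_vector_derivative_real_field)
        qed
        show "isCont g s" for s unfolding g_def using nz[of s] by (intro continuous_intros) auto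
        show "set_integrable lborel (einterval (ereal t) \<infinity>) g" by (rule si)
        show "((Fz \<circ> real_of_ereal) \<longlongrightarrow> Fz t) (at_right (ereal t))"
          unfolding ereal_tendsto_simps1
          using Fz_cont[of t] by (simp add: isCont_def filterlim_at_split)
        show "((Fz \<circ> real_of_ereal) \<longlongrightarrow> 0) (at_left \<infinity>)"
          unfolding ereal_tendsto_simps1
        proof (rule Lim_null_comparison)
          show "\<forall>\<^sub>F s in at_top. norm (Fz s) \<le> C1 * (1 / (1 + \<bar>s\<bar>))"
            using C1(2) by (intro always_eventually allI) (simp add: Fz_def w1_eq norm_divide)
          show "((\<lambda>s. C1 * (1 / (1 + \<bar>s\<bar>))) \<longlongrightarrow> 0) at_top"
            using tendsto_mult_right_zero[OF lim_inv_abs, of C1] by simp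
        qed
      qed
      then have "(LBINT s=ereal t..\<infinity>. g s) = 1 / (z + of_real t)" by (simp add: Fz_def)
      moreover have "(LBINT s=ereal t..\<infinity>. g s) = (\<integral>s. h s t \<partial>lborel)"
        unfolding interval_lebesgue_integral_def set_lebesgue_integral_def einterval_eq_Ici
        by (auto simp: h_def split: split_indicator intro!: Bochner_Integration.integral_cong)
      ultimately show ?thesis by simp
    qed
    have "C_transform 1 \<nu> z = (\<integral>t. (\<integral>s. h s t \<partial>lborel) \<partial>\<nu>)"
      by (simp add: C_transform_def inner2)
    also have "\<dots> = (\<integral>s. F s *\<^sub>R g s \<partial>lborel)" by (simp add: fub inner1)
    also have "\<dots> = C_transform 2 \<mu> z"
      unfolding C_transform_def \<mu>_def g_def
      by (rule integral_density[symmetric]) (auto intro: Fm simp: F0)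
    finally show ?thesis .
  qed
  show ?thesis using muM eqz by blast
qed

theorem theorem7p16:
  fixes \<nu> :: "real measure"
  assumes "\<nu> \<in> M_plus 1"
  shows "(\<exists>\<mu> \<in> M_plus 2. \<forall>z. Im z > 0 \<longrightarrow> C_transform 1 \<nu> z = C_transform 2 \<mu> z)
         \<longleftrightarrow> emeasure \<nu> {..0} < \<infinity>"
proof
  assume "\<exists>\<mu> \<in> M_plus 2. \<forall>z. Im z > 0 \<longrightarrow> C_transform 1 \<nu> z = C_transform 2 \<mu> z"
  then obtain \<mu> where mu: "\<mu> \<in> M_plus 2" and eq: "\<forall>z. Im z > 0 \<longrightarrow> C_transform 1 \<nu> z = C_transform 2 \<mu> z"
    by blast
  show "emeasure \<nu> {..0} < \<infinity>" by (rule only_if_dir[OF assms mu eq])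
next
  assume "emeasure \<nu> {..0} < \<infinity>"
  then show "\<exists>\<mu> \<in> M_plus 2. \<forall>z. Im z > 0 \<longrightarrow> C_transform 1 \<nu> z = C_transform 2 \<mu> z"
    by (rule if_dir[OF assms])
qed

end
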